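(* Let $V$ be a quasi-regular mixed lattice vector space, let $A$ be an ideal of $V$ and put $W=A_{sp}-A_{sp}$. Then $W$ is a quasi-ideal, and there is no ideal $B$ of $V$ with $W\subseteq B\subseteq A$ and $B\neq A$. In particular, if $W$ is an ideal then $W=A$.
   Context: A mixed lattice vector space is a real vector space $V$ with two partial orderings $\le$ (initial) and $\preceq$ (specific), each compatible with the vector space structure ($x\le y\Rightarrow x+z\le y+z$ and $\alpha x\le\alpha y$ for $\alpha\ge 0$; likewise for $\preceq$), such that for all $x,y$ the mixed lower envelope $x\curlywedge y=\max\{w: w\preceq x,\ w\le y\}$ and mixed upper envelope $x\curlyvee y=\min\{w: x\preceq w,\ y\le w\}$ exist (max/min with respect to $\le$). Let $V_p=\{x:0\le x\}$, $V_{sp}=\{x:0\preceq x\}$ and for $E\subseteq V$, $E_p=E\cap V_p$, $E_{sp}=E\cap V_{sp}$. $V$ is quasi-regular if $V_{sp}$ is closed under $\curlywedge,\curlyvee$. A mixed lattice subspace is a linear subspace closed under $\curlywedge$ and $\curlyvee$. An ideal is a mixed lattice subspace $A$ that is $(\le)$-order convex ($x\le z\le y$, $x,y\in A$ imply $z\in A$). A quasi-ideal is a mixed lattice subspace $A$ that is mixed-order convex: $y\in A$ and $0\preceq x\le y$ imply $x\in A$. *)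

theory Defs
  imports Complex_Main
begin

definition vs_order :: "('a::real_vector \<Rightarrow> 'a \<Rightarrow> bool) \<Rightarrow> bool" where
  "vs_order r \<longleftrightarrow>
     (\<forall>x. r x x) \<and> (\<forall>x y. r x y \<and> r y x \<longrightarrow> x = y) \<and>
     (\<forall>x y z. r x y \<and> r y z \<longrightarrow> r x z) \<and>
     (\<forall>x y z. r x y \<longrightarrow> r (x + z) (y + z)) \<and>
     (\<forall>x y (a::real). r x y \<and> 0 \<le> a \<longrightarrow> r (a *\<^sub>R x) (a *\<^sub>R y))"

text \<open>\<open>le\<close> is the initial order \<open>\<le>\<close>, \<open>sle\<close> the specific order \<open>\<preceq>\<close>.
  \<open>w\<close> is the mixed lower envelope of \<open>x, y\<close>: the \<open>le\<close>-maximum of \<open>{w. w \<preceq> x, w \<le> y}\<close>.\<close>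
definition is_mlower :: "('a \<Rightarrow> 'a \<Rightarrow> bool) \<Rightarrow> ('a \<Rightarrow> 'a \<Rightarrow> bool) \<Rightarrow> 'a \<Rightarrow> 'a \<Rightarrow> 'a \<Rightarrow> bool" where
  "is_mlower le sle x y w \<longleftrightarrow> sle w x \<and> le w y \<and> (\<forall>v. sle v x \<and> le v y \<longrightarrow> le v w)"

definition is_mupper :: "('a \<Rightarrow> 'a \<Rightarrow> bool) \<Rightarrow> ('a \<Rightarrow> 'a \<Rightarrow> bool) \<Rightarrow> 'a \<Rightarrow> 'a \<Rightarrow> 'a \<Rightarrow> bool" where
  "is_mupper le sle x y w \<longleftrightarrow> sle x w \<and> le y w \<and> (\<forall>v. sle x v \<and> le y v \<longrightarrow> le w v)"

definition mlower :: "('a \<Rightarrow> 'a \<Rightarrow> bool) \<Rightarrow> ('a \<Rightarrow> 'a \<Rightarrow> bool) \<Rightarrow> 'a \<Rightarrow> 'a \<Rightarrow> 'a" where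
  "mlower le sle x y = (THE w. is_mlower le sle x y w)"

definition mupper :: "('a \<Rightarrow> 'a \<Rightarrow> bool) \<Rightarrow> ('a \<Rightarrow> 'a \<Rightarrow> bool) \<Rightarrow> 'a \<Rightarrow> 'a \<Rightarrow> 'a" where
  "mupper le sle x y = (THE w. is_mupper le sle x y w)"

definition mixed_lattice_vs :: "('a::real_vector \<Rightarrow> 'a \<Rightarrow> bool) \<Rightarrow> ('a \<Rightarrow> 'a \<Rightarrow> bool) \<Rightarrow> bool" where
  "mixed_lattice_vs le sle \<longleftrightarrow> vs_order le \<and> vs_order sle \<and>
     (\<forall>x y. \<exists>w. is_mlower le sle x y w) \<and> (\<forall>x y. \<exists>w. is_mupper le sle x y w)"

definition quasi_regular :: "('a::real_vector \<Rightarrow> 'a \<Rightarrow> bool) \<Rightarrow> ('a \<Rightarrow> 'a \<Rightarrow> bool) \<Rightarrow> bool" where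
  "quasi_regular le sle \<longleftrightarrow>
     (\<forall>x y. sle 0 x \<and> sle 0 y \<longrightarrow> sle 0 (mlower le sle x y) \<and> sle 0 (mupper le sle x y))"

definition mixed_lattice_subspace :: "('a::real_vector \<Rightarrow> 'a \<Rightarrow> bool) \<Rightarrow> ('a \<Rightarrow> 'a \<Rightarrow> bool) \<Rightarrow> 'a set \<Rightarrow> bool" where
  "mixed_lattice_subspace le sle A \<longleftrightarrow> subspace A \<and>
     (\<forall>x\<in>A. \<forall>y\<in>A. mlower le sle x y \<in> A \<and> mupper le sle x y \<in> A)"

definition ml_ideal :: "('a::real_vector \<Rightarrow> 'a \<Rightarrow> bool) \<Rightarrow> ('a \<Rightarrow> 'a \<Rightarrow> bool) \<Rightarrow> 'a set \<Rightarrow> bool" where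
  "ml_ideal le sle A \<longleftrightarrow> mixed_lattice_subspace le sle A \<and>
     (\<forall>x y z. x \<in> A \<and> y \<in> A \<and> le x z \<and> le z y \<longrightarrow> z \<in> A)"

definition ml_quasi_ideal :: "('a::real_vector \<Rightarrow> 'a \<Rightarrow> bool) \<Rightarrow> ('a \<Rightarrow> 'a \<Rightarrow> bool) \<Rightarrow> 'a set \<Rightarrow> bool" where
  "ml_quasi_ideal le sle A \<longleftrightarrow> mixed_lattice_subspace le sle A \<and>
     (\<forall>x y. y \<in> A \<and> sle 0 x \<and> le x y \<longrightarrow> x \<in> A)"

definition sp_part :: "('a::real_vector \<Rightarrow> 'a \<Rightarrow> bool) \<Rightarrow> 'a set \<Rightarrow> 'a set" where
  "sp_part sle E = {x \<in> E. sle 0 x}"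

end

theory Submission
  imports Defs
begin

lemma vs_orderD:
  assumes "vs_order r"
  shows "r x x" "r x y \<Longrightarrow> r y x \<Longrightarrow> x = y" "r x y \<Longrightarrow> r y z \<Longrightarrow> r x z"
    "r x y \<Longrightarrow> r (x + z) (y + z)" "r x y \<Longrightarrow> 0 \<le> a \<Longrightarrow> r (a *\<^sub>R x) (a *\<^sub>R y)"
  using assms unfolding vs_order_def by blast+

lemma vs_order_shift:
  assumes "vs_order r" "r (x + z) (y + z)" shows "r x y"
  using vs_orderD(4)[OF assms(1) assms(2), of "-z"] by simp

lemma mlower_is:
  assumes "mixed_lattice_vs le sle"
  shows "is_mlower le sle x y (mlower le sle x y)"
proof -
  have le: "vs_order le" using assms unfolding mixed_lattice_vs_def by blast
  obtain w where w: "is_mlower le sle x y w" using assms unfolding mixed_lattice_vs_def by blast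
  have "\<And>w'. is_mlower le sle x y w' \<Longrightarrow> w' = w"
    using w vs_orderD(2)[OF le] unfolding is_mlower_def by blast
  then show ?thesis unfolding mlower_def using w theI[of "is_mlower le sle x y" w] by blast
qed

lemma mupper_is:
  assumes "mixed_lattice_vs le sle"
  shows "is_mupper le sle x y (mupper le sle x y)"
proof -
  have le: "vs_order le" using assms unfolding mixed_lattice_vs_def by blast
  obtain w where w: "is_mupper le sle x y w" using assms unfolding mixed_lattice_vs_def by blast
  have "\<And>w'. is_mupper le sle x y w' \<Longrightarrow> w' = w"
    using w vs_orderD(2)[OF le] unfolding is_mupper_def by blast
  then show ?thesis unfolding mupper_def using w theI[of "is_mupper le sle x y" w] by blast
qed

lemma mlower_shift:
  assumes "mixed_lattice_vs le sle"
  shows "mlower le sle (x + z) (y + z) = mlower le sle x y + z"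
proof -
  have le: "vs_order le" and sle: "vs_order sle" using assms unfolding mixed_lattice_vs_def by blast+
  let ?w = "mlower le sle x y"
  have w: "is_mlower le sle x y ?w" by (rule mlower_is[OF assms])
  have "is_mlower le sle (x + z) (y + z) (?w + z)"
    unfolding is_mlower_def
  proof (intro conjI allI impI)
    show "sle (?w + z) (x + z)" using w vs_orderD(4)[OF sle] unfolding is_mlower_def by blast
    show "le (?w + z) (y + z)" using w vs_orderD(4)[OF le] unfolding is_mlower_def by blast
    fix v assume v: "sle v (x + z) \<and> le v (y + z)"
    have "sle (v - z) x" using vs_order_shift[OF sle, of "v - z" z x] v by simp
    moreover have "le (v - z) y" using vs_order_shift[OF le, of "v - z" z y] v by simp
    ultimately have "le (v - z) ?w" using w unfolding is_mlower_def by blast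
    then show "le v (?w + z)" using vs_orderD(4)[OF le, of "v - z" ?w z] by simp
  qed
  moreover have "is_mlower le sle (x + z) (y + z) (mlower le sle (x + z) (y + z))"
    by (rule mlower_is[OF assms])
  ultimately show ?thesis using vs_orderD(2)[OF le] unfolding is_mlower_def by blast
qed

lemma mupper_shift:
  assumes "mixed_lattice_vs le sle"
  shows "mupper le sle (x + z) (y + z) = mupper le sle x y + z"
proof -
  have le: "vs_order le" and sle: "vs_order sle" using assms unfolding mixed_lattice_vs_def by blast+
  let ?w = "mupper le sle x y"
  have w: "is_mupper le sle x y ?w" by (rule mupper_is[OF assms])
  have "is_mupper le sle (x + z) (y + z) (?w + z)"
    unfolding is_mupper_def
  proof (intro conjI allI impI)
    show "sle (x + z) (?w + z)" using w vs_orderD(4)[OF sle] unfolding is_mupper_def by blast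
    show "le (y + z) (?w + z)" using w vs_orderD(4)[OF le] unfolding is_mupper_def by blast
    fix v assume v: "sle (x + z) v \<and> le (y + z) v"
    have "sle x (v - z)" using vs_order_shift[OF sle, of x z "v - z"] v by simp
    moreover have "le y (v - z)" using vs_order_shift[OF le, of y z "v - z"] v by simp
    ultimately have "le ?w (v - z)" using w unfolding is_mupper_def by blast
    then show "le (?w + z) v" using vs_orderD(4)[OF le, of ?w "v - z" z] by simp
  qed
  moreover have "is_mupper le sle (x + z) (y + z) (mupper le sle (x + z) (y + z))"
    by (rule mupper_is[OF assms])
  ultimately show ?thesis using vs_orderD(2)[OF le] unfolding is_mupper_def by blast
qed

lemma sp_le:
  assumes "mixed_lattice_vs le sle" "quasi_regular le sle" "sle 0 x"
  shows "le 0 x"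
proof -
  have sle: "vs_order sle" using assms unfolding mixed_lattice_vs_def by blast
  have sr: "sle 0 0" by (rule vs_orderD(1)[OF sle])
  let ?m = "mlower le sle 0 x"
  have m: "is_mlower le sle 0 x ?m" by (rule mlower_is[OF assms(1)])
  have "sle 0 ?m" using assms(2,3) sr unfolding quasi_regular_def by blast
  moreover have "sle ?m 0" using m unfolding is_mlower_def by blast
  ultimately have "?m = 0" using vs_orderD(2)[OF sle] by blast
  then show ?thesis using m unfolding is_mlower_def by simp
qed

theorem theorem4p12:
  fixes le sle :: "'a::real_vector \<Rightarrow> 'a \<Rightarrow> bool" and A :: "'a set"
  assumes "mixed_lattice_vs le sle"
    and "quasi_regular le sle"
    and "ml_ideal le sle A"
  defines "W \<equiv> {x - y | x y. x \<in> sp_part sle A \<and> y \<in> sp_part sle A}"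
  shows "ml_quasi_ideal le sle W
    \<and> \<not> (\<exists>B. ml_ideal le sle B \<and> W \<subseteq> B \<and> B \<subseteq> A \<and> B \<noteq> A)
    \<and> (ml_ideal le sle W \<longrightarrow> W = A)"
proof -
  have le: "vs_order le" and sle: "vs_order sle" using assms(1) unfolding mixed_lattice_vs_def by blast+
  have subA: "subspace A" using assms(3) unfolding ml_ideal_def mixed_lattice_subspace_def by blast
  have clA: "\<And>x y. x \<in> A \<Longrightarrow> y \<in> A \<Longrightarrow> mlower le sle x y \<in> A \<and> mupper le sle x y \<in> A"
    using assms(3) unfolding ml_ideal_def mixed_lattice_subspace_def by blast
  have cvA: "\<And>x y z. x \<in> A \<Longrightarrow> y \<in> A \<Longrightarrow> le x z \<Longrightarrow> le z y \<Longrightarrow> z \<in> A"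
    using assms(3) unfolding ml_ideal_def by blast
  have sp_add: "\<And>a b. sle 0 a \<Longrightarrow> sle 0 b \<Longrightarrow> sle 0 (a + b)"
  proof -
    fix a b :: 'a assume "sle 0 a" "sle 0 b"
    then have "sle (0 + b) (a + b)" using vs_orderD(4)[OF sle] by blast
    then show "sle 0 (a + b)" using \<open>sle 0 b\<close> vs_orderD(3)[OF sle] by simp
  qed
  have sp_scale: "\<And>a t. sle 0 a \<Longrightarrow> 0 \<le> t \<Longrightarrow> sle 0 (t *\<^sub>R a)"
    using vs_orderD(5)[OF sle] by fastforce
  have Wmem: "\<And>a b. a \<in> A \<Longrightarrow> b \<in> A \<Longrightarrow> sle 0 a \<Longrightarrow> sle 0 b \<Longrightarrow> a - b \<in> W"
    unfolding W_def sp_part_def by blast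
  have WE: "\<And>x. x \<in> W \<Longrightarrow> \<exists>a b. x = a - b \<and> a \<in> A \<and> b \<in> A \<and> sle 0 a \<and> sle 0 b"
    unfolding W_def sp_part_def by blast
  have WA: "W \<subseteq> A" using subA WE by (blast intro: subspace_diff)
  have sp_in_W: "\<And>a. a \<in> A \<Longrightarrow> sle 0 a \<Longrightarrow> a \<in> W"
    using Wmem[of _ 0] subA subspace_0 vs_orderD(1)[OF sle] by fastforce
  have subW: "subspace W"
    unfolding subspace_def
  proof (intro conjI ballI allI)
    show "0 \<in> W" using sp_in_W[of 0] subA subspace_0 vs_orderD(1)[OF sle] by blast
  next
    fix x y assume "x \<in> W" "y \<in> W"
    then obtain a b c d where "x = a - b" "y = c - d" "a \<in> A" "b \<in> A" "c \<in> A" "d \<in> A"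
      "sle 0 a" "sle 0 b" "sle 0 c" "sle 0 d" using WE by metis
    then show "x + y \<in> W"
      using Wmem[of "a + c" "b + d"] sp_add subA subspace_add by (fastforce simp: algebra_simps)
  next
    fix t :: real and x assume "x \<in> W"
    then obtain a b where ab: "x = a - b" "a \<in> A" "b \<in> A" "sle 0 a" "sle 0 b" using WE by metis
    show "t *\<^sub>R x \<in> W"
    proof (cases "0 \<le> t")
      case True
      have "t *\<^sub>R a \<in> A" "t *\<^sub>R b \<in> A" using ab subA subspace_scale by blast+
      moreover have "sle 0 (t *\<^sub>R a)" "sle 0 (t *\<^sub>R b)" using ab sp_scale True by blast+
      ultimately show ?thesis using ab Wmem[of "t *\<^sub>R a" "t *\<^sub>R b"]
        by (simp add: scaleR_diff_right)
    next
      case False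
      then have "0 \<le> - t" by simp
      have "(- t) *\<^sub>R a \<in> A" "(- t) *\<^sub>R b \<in> A" using ab subA subspace_scale by blast+
      moreover have "sle 0 ((- t) *\<^sub>R a)" "sle 0 ((- t) *\<^sub>R b)" using ab sp_scale \<open>0 \<le> - t\<close> by blast+
      ultimately have "(- t) *\<^sub>R b - (- t) *\<^sub>R a \<in> W" using Wmem by blast
      then show ?thesis using ab by (simp add: scaleR_diff_right)
    qed
  qed
  have clW: "\<And>x y. x \<in> W \<Longrightarrow> y \<in> W \<Longrightarrow> mlower le sle x y \<in> W \<and> mupper le sle x y \<in> W"
  proof -
    fix x y assume "x \<in> W" "y \<in> W"
    then obtain a b c d where e: "x = a - b" "y = c - d" "a \<in> A" "b \<in> A" "c \<in> A" "d \<in> A"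
      "sle 0 a" "sle 0 b" "sle 0 c" "sle 0 d" using WE by metis
    have p: "a + d \<in> A" "c + b \<in> A" "b + d \<in> A" using e subA subspace_add by blast+
    have q: "sle 0 (a + d)" "sle 0 (c + b)" "sle 0 (b + d)" using e sp_add by blast+
    have xs: "x + (b + d) = a + d" "y + (b + d) = c + b" using e by (simp_all add: algebra_simps)
    have l: "mlower le sle x y = mlower le sle (a + d) (c + b) - (b + d)"
      using mlower_shift[OF assms(1), of x "b + d" y] xs by simp
    have u: "mupper le sle x y = mupper le sle (a + d) (c + b) - (b + d)"
      using mupper_shift[OF assms(1), of x "b + d" y] xs by simp
    have "sle 0 (mlower le sle (a + d) (c + b))" "sle 0 (mupper le sle (a + d) (c + b))"
      using assms(2) q unfolding quasi_regular_def by blast+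
    then show "mlower le sle x y \<in> W \<and> mupper le sle x y \<in> W"
      using l u Wmem clA[OF p(1) p(2)] p q by simp
  qed
  have QI: "ml_quasi_ideal le sle W"
    unfolding ml_quasi_ideal_def mixed_lattice_subspace_def
  proof (intro conjI allI impI ballI subW)
    fix x y assume "x \<in> W" "y \<in> W"
    then show "mlower le sle x y \<in> W" "mupper le sle x y \<in> W" using clW by blast+
  next
    fix x y assume h: "y \<in> W \<and> sle 0 x \<and> le x y"
    then have "le 0 x" using sp_le[OF assms(1,2)] by blast
    then have "x \<in> A" using cvA[of 0 y x] h WA subA subspace_0 by blast
    then show "x \<in> W" using sp_in_W h by blast
  qed
  have MAX: "\<And>B. ml_ideal le sle B \<Longrightarrow> W \<subseteq> B \<Longrightarrow> B \<subseteq> A \<Longrightarrow> B = A"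
  proof -
    fix B assume B: "ml_ideal le sle B" "W \<subseteq> B" "B \<subseteq> A"
    have "A \<subseteq> B"
    proof
      fix a assume a: "a \<in> A"
      have z: "0 \<in> A" using subA subspace_0 by blast
      let ?u = "mupper le sle 0 a" and ?v = "mlower le sle 0 a"
      have u: "is_mupper le sle 0 a ?u" by (rule mupper_is[OF assms(1)])
      have v: "is_mlower le sle 0 a ?v" by (rule mlower_is[OF assms(1)])
      have uA: "?u \<in> A" and vA: "?v \<in> A" using clA[OF z a] by blast+
      have "?u \<in> W" using sp_in_W[OF uA] u unfolding is_mupper_def by blast
      moreover have "sle 0 (- ?v)"
        using v vs_orderD(4)[OF sle, of ?v 0 "- ?v"] unfolding is_mlower_def by simp
      then have "0 - (- ?v) \<in> W" using Wmem[of 0 "- ?v"] z vA subA subspace_neg vs_orderD(1)[OF sle]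
        by blast
      then have "?v \<in> W" by simp
      ultimately have "?u \<in> B" "?v \<in> B" using B by blast+
      moreover have "le ?v a" "le a ?u" using u v unfolding is_mupper_def is_mlower_def by blast+
      ultimately show "a \<in> B" using B(1) unfolding ml_ideal_def by blast
    qed
    then show "B = A" using B by blast
  qed
  show ?thesis using QI MAX WA by blast
qed

end
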